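(* Let $B_0$ and $B_1$ be boards with $B_0\lessdot B_1$. If $B_0$ has a perfect layout, then $B_1$ also has a perfect layout.
   Context: A board is an $m\times n$ grid of unit cells in which exactly $c$ cells are sinks, one of each of $c$ colors, and all other cells are empty. A layout places, in some of the empty cells, arrows, each having one of the $c$ colors and one of the four cardinal directions. A packet of color $i$ may enter the grid through any unit edge of the outer boundary of the grid, into the adjacent cell, moving perpendicular to that edge into the grid; it moves one cell at a time in its current direction, and whenever it enters a cell containing an arrow of color $i$ its direction becomes that arrow's direction (arrows of other colors are ignored). The packet succeeds if it enters the sink of color $i$; it fails if it enters a sink of another color, leaves the grid, or travels forever without reaching a sink. A perfect layout is a layout in which every packet of every color entering through every boundary edge succeeds. For boards $B_0,B_1$, $B_0\lessdot B_1$ means that $B_0$ is obtained from $B_1$ by deleting a single row or column of $B_1$ that contains no sink. *)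

theory Defs
  imports Main
begin

text \<open>Row index grows southwards, column index grows eastwards.\<close>

datatype dir = North | South | East | West

fun delta :: "dir \<Rightarrow> int \<times> int" where
  "delta North = (-1, 0)"
| "delta South = (1, 0)"
| "delta East = (0, 1)"
| "delta West = (0, -1)"

record board =
  rows :: nat
  cols :: nat
  ncolors :: nat
  sink :: "nat \<Rightarrow> int \<times> int"

definition in_grid :: "board \<Rightarrow> int \<times> int \<Rightarrow> bool" where
  "in_grid B p \<longleftrightarrow> 0 \<le> fst p \<and> fst p < int (rows B) \<and> 0 \<le> snd p \<and> snd p < int (cols B)"

definition is_board :: "board \<Rightarrow> bool" where
  "is_board B \<longleftrightarrow> rows B \<ge> 1 \<and> cols B \<ge> 1 \<and> inj_on (sink B) {..<ncolors B}
     \<and> (\<forall>k<ncolors B. in_grid B (sink B k))"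

definition is_sink :: "board \<Rightarrow> int \<times> int \<Rightarrow> bool" where
  "is_sink B p \<longleftrightarrow> (\<exists>k<ncolors B. sink B k = p)"

type_synonym layout = "int \<times> int \<Rightarrow> (nat \<times> dir) option"

definition is_layout :: "board \<Rightarrow> layout \<Rightarrow> bool" where
  "is_layout B L \<longleftrightarrow> (\<forall>p k d. L p = Some (k, d) \<longrightarrow>
      in_grid B p \<and> \<not> is_sink B p \<and> k < ncolors B)"

text \<open>State of a packet of color k after t moves: the cell it has just entered
  and the direction in which it moved into that cell.\<close>
fun packet_state :: "layout \<Rightarrow> nat \<Rightarrow> int \<times> int \<Rightarrow> dir \<Rightarrow> nat \<Rightarrow> (int \<times> int) \<times> dir" where
  "packet_state L k p d 0 = (p, d)"
| "packet_state L k p d (Suc t) =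
     (let (q, e) = packet_state L k p d t;
          e' = (case L q of Some (k', a) \<Rightarrow> if k' = k then a else e | None \<Rightarrow> e)
      in ((fst q + fst (delta e'), snd q + snd (delta e')), e'))"

definition succeeds :: "board \<Rightarrow> layout \<Rightarrow> nat \<Rightarrow> int \<times> int \<Rightarrow> dir \<Rightarrow> bool" where
  "succeeds B L k p d \<longleftrightarrow> (\<exists>t. fst (packet_state L k p d t) = sink B k \<and>
     (\<forall>s<t. in_grid B (fst (packet_state L k p d s)) \<and> \<not> is_sink B (fst (packet_state L k p d s))))"

text \<open>Entry points: the boundary cell entered and the direction of motion,
  one for each unit edge of the outer boundary.\<close>
definition entries :: "board \<Rightarrow> ((int \<times> int) \<times> dir) set" where
  "entries B =
     {((i, 0), East) | i. 0 \<le> i \<and> i < int (rows B)}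
   \<union> {((i, int (cols B) - 1), West) | i. 0 \<le> i \<and> i < int (rows B)}
   \<union> {((0, j), South) | j. 0 \<le> j \<and> j < int (cols B)}
   \<union> {((int (rows B) - 1, j), North) | j. 0 \<le> j \<and> j < int (cols B)}"

definition perfect_layout :: "board \<Rightarrow> layout \<Rightarrow> bool" where
  "perfect_layout B L \<longleftrightarrow> is_layout B L \<and>
     (\<forall>k<ncolors B. \<forall>(p, d)\<in>entries B. succeeds B L k p d)"

definition has_perfect_layout :: "board \<Rightarrow> bool" where
  "has_perfect_layout B \<longleftrightarrow> (\<exists>L. perfect_layout B L)"

text \<open>B0 \<lessdot> B1: B0 arises from B1 by deleting a sink-free row or column.\<close>
definition covered_by :: "board \<Rightarrow> board \<Rightarrow> bool" where
  "covered_by B0 B1 \<longleftrightarrow> ncolors B0 = ncolors B1 \<and>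
    ((cols B0 = cols B1 \<and> rows B1 = rows B0 + 1 \<and>
      (\<exists>r. 0 \<le> r \<and> r < int (rows B1) \<and>
        (\<forall>k<ncolors B1. fst (sink B1 k) \<noteq> r \<and>
           sink B0 k = (if fst (sink B1 k) < r then sink B1 k
                        else (fst (sink B1 k) - 1, snd (sink B1 k))))))
   \<or> (rows B0 = rows B1 \<and> cols B1 = cols B0 + 1 \<and>
      (\<exists>c. 0 \<le> c \<and> c < int (cols B1) \<and>
        (\<forall>k<ncolors B1. snd (sink B1 k) \<noteq> c \<and>
           sink B0 k = (if snd (sink B1 k) < c then sink B1 k
                        else (fst (sink B1 k), snd (sink B1 k) - 1))))))"

end

theory Submission
  imports Defs
begin

definition eff :: "layout \<Rightarrow> nat \<Rightarrow> int \<times> int \<Rightarrow> dir \<Rightarrow> dir" where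
  "eff L k q e = (case L q of Some (k', a) \<Rightarrow> if k' = k then a else e | None \<Rightarrow> e)"

definition mv :: "int \<times> int \<Rightarrow> dir \<Rightarrow> int \<times> int" where
  "mv q e = (fst q + fst (delta e), snd q + snd (delta e))"

lemma ps_Suc: "packet_state L k p d (Suc t) =
  (mv (fst (packet_state L k p d t)) (eff L k (fst (packet_state L k p d t)) (snd (packet_state L k p d t))),
   eff L k (fst (packet_state L k p d t)) (snd (packet_state L k p d t)))"
  by (simp add: Let_def split_def eff_def mv_def)

lemma eff_idem: "eff L k q (eff L k q e) = eff L k q e"
  by (auto simp: eff_def split: option.splits)

lemma sim:
  fixes \<phi> :: "int \<times> int \<Rightarrow> int \<times> int"
  assumes P3: "\<And>q e. \<phi> (mv q e) = mv (\<phi> q) e \<or> (\<phi> (mv q e) = \<phi> q \<and> \<phi> (mv (mv q e) e) = mv (\<phi> q) e)"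
    and L1eq: "\<And>q. \<not> is_sink B0 (\<phi> q) \<Longrightarrow> L1 q = L0 (\<phi> q)"
    and grid: "\<And>q. in_grid B0 (\<phi> q) \<Longrightarrow> in_grid B1 q"
    and sinkimg: "\<And>q. is_sink B1 q \<Longrightarrow> is_sink B0 (\<phi> q)"
    and pre: "\<forall>s<T. in_grid B0 (fst (packet_state L0 k (\<phi> p) d s)) \<and> \<not> is_sink B0 (fst (packet_state L0 k (\<phi> p) d s))"
  shows "t0 \<le> T \<Longrightarrow> \<exists>t1. \<phi> (fst (packet_state L1 k p d t1)) = fst (packet_state L0 k (\<phi> p) d t0)
     \<and> (\<not> is_sink B0 (fst (packet_state L0 k (\<phi> p) d t0)) \<longrightarrow>
          eff L1 k (fst (packet_state L1 k p d t1)) (snd (packet_state L1 k p d t1))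
          = eff L0 k (fst (packet_state L0 k (\<phi> p) d t0)) (snd (packet_state L0 k (\<phi> p) d t0)))
     \<and> (\<forall>s<t1. in_grid B1 (fst (packet_state L1 k p d s)) \<and> \<not> is_sink B1 (fst (packet_state L1 k p d s)))"
proof (induction t0)
  case 0
  then show ?case
    by (intro exI[of _ 0]) (auto simp: eff_def L1eq)
next
  case (Suc t0)
  let ?ps0 = "packet_state L0 k (\<phi> p) d"
  let ?ps1 = "packet_state L1 k p d"
  from Suc obtain t1 where
    h1: "\<phi> (fst (?ps1 t1)) = fst (?ps0 t0)" and
    h2: "\<not> is_sink B0 (fst (?ps0 t0)) \<longrightarrow> eff L1 k (fst (?ps1 t1)) (snd (?ps1 t1)) = eff L0 k (fst (?ps0 t0)) (snd (?ps0 t0))" and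
    h3: "\<forall>s<t1. in_grid B1 (fst (?ps1 s)) \<and> \<not> is_sink B1 (fst (?ps1 s))"
    by auto
  define q1 where "q1 = fst (?ps1 t1)"
  define q0 where "q0 = fst (?ps0 t0)"
  have g0: "in_grid B0 q0" "\<not> is_sink B0 q0" using pre Suc.prems unfolding q0_def by auto
  define e' where "e' = eff L0 k q0 (snd (?ps0 t0))"
  have e1: "eff L1 k q1 (snd (?ps1 t1)) = e'" using h2 g0 unfolding q1_def q0_def e'_def by auto
  have s0: "?ps0 (Suc t0) = (mv q0 e', e')" unfolding ps_Suc q0_def e'_def by simp
  have s1: "?ps1 (Suc t1) = (mv q1 e', e')" using e1 unfolding ps_Suc q1_def by simp
  have phq: "\<phi> q1 = q0" using h1 unfolding q1_def q0_def .
  have q1ok: "in_grid B1 q1 \<and> \<not> is_sink B1 q1" using g0 phq grid sinkimg by blast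
  have pre1: "\<forall>s<Suc t1. in_grid B1 (fst (?ps1 s)) \<and> \<not> is_sink B1 (fst (?ps1 s))"
    using h3 q1ok unfolding q1_def by (auto simp: less_Suc_eq)
  from P3[of q1 e'] show ?case
  proof
    assume A: "\<phi> (mv q1 e') = mv (\<phi> q1) e'"
    show ?case
    proof (intro exI[of _ "Suc t1"] conjI)
      show "\<phi> (fst (?ps1 (Suc t1))) = fst (?ps0 (Suc t0))" using A s0 s1 phq by simp
      show "\<not> is_sink B0 (fst (?ps0 (Suc t0))) \<longrightarrow> eff L1 k (fst (?ps1 (Suc t1))) (snd (?ps1 (Suc t1))) =
          eff L0 k (fst (?ps0 (Suc t0))) (snd (?ps0 (Suc t0)))"
        using A s0 s1 phq L1eq by (simp add: eff_def)
    qed (use pre1 in auto)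
  next
    assume B: "\<phi> (mv q1 e') = \<phi> q1 \<and> \<phi> (mv (mv q1 e') e') = mv (\<phi> q1) e'"
    have L1' : "L1 (mv q1 e') = L0 q0" using B phq L1eq g0 by simp
    have e2: "eff L1 k (mv q1 e') e' = e'"
      using L1' eff_idem[of L0 k q0] unfolding e'_def eff_def by (auto split: option.splits)
    have s2: "?ps1 (Suc (Suc t1)) = (mv (mv q1 e') e', e')"
      using s1 e2 by (subst ps_Suc) simp
    have q1'ok: "in_grid B1 (mv q1 e') \<and> \<not> is_sink B1 (mv q1 e')"
      using g0 B phq grid sinkimg by metis
    show ?case
    proof (intro exI[of _ "Suc (Suc t1)"] conjI)
      show "\<phi> (fst (?ps1 (Suc (Suc t1)))) = fst (?ps0 (Suc t0))" using B s0 s2 phq by simp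
      show "\<not> is_sink B0 (fst (?ps0 (Suc t0))) \<longrightarrow> eff L1 k (fst (?ps1 (Suc (Suc t1)))) (snd (?ps1 (Suc (Suc t1)))) =
          eff L0 k (fst (?ps0 (Suc t0))) (snd (?ps0 (Suc t0)))"
        using B s0 s2 phq L1eq by (simp add: eff_def)
      show "\<forall>s<Suc (Suc t1). in_grid B1 (fst (?ps1 s)) \<and> \<not> is_sink B1 (fst (?ps1 s))"
        using pre1 q1'ok s1 by (auto simp: less_Suc_eq)
    qed
  qed
qed


lemma succ_transfer:
  fixes \<phi> :: "int \<times> int \<Rightarrow> int \<times> int"
  assumes P3: "\<And>q e. \<phi> (mv q e) = mv (\<phi> q) e \<or> (\<phi> (mv q e) = \<phi> q \<and> \<phi> (mv (mv q e) e) = mv (\<phi> q) e)"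
    and L1eq: "\<And>q. \<not> is_sink B0 (\<phi> q) \<Longrightarrow> L1 q = L0 (\<phi> q)"
    and grid: "\<And>q. in_grid B0 (\<phi> q) \<Longrightarrow> in_grid B1 q"
    and sinkimg: "\<And>q. is_sink B1 q \<Longrightarrow> is_sink B0 (\<phi> q)"
    and spec: "\<And>q. in_grid B1 q \<Longrightarrow> \<not> is_sink B1 q \<Longrightarrow> \<phi> q = sink B0 k \<Longrightarrow>
        \<exists>dd. L1 q = Some (k, dd) \<and> mv q dd = sink B1 k"
    and kin: "sink B0 k = \<phi> (sink B1 k)"
    and s0: "succeeds B0 L0 k (\<phi> p) d"
    and ing: "in_grid B0 (sink B0 k)"
    and uniq: "\<And>q. is_sink B1 q \<Longrightarrow> \<phi> q = sink B0 k \<Longrightarrow> q = sink B1 k"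
  shows "succeeds B1 L1 k p d"
proof -
  from s0 obtain T where T1: "fst (packet_state L0 k (\<phi> p) d T) = sink B0 k"
    and T2: "\<forall>s<T. in_grid B0 (fst (packet_state L0 k (\<phi> p) d s)) \<and> \<not> is_sink B0 (fst (packet_state L0 k (\<phi> p) d s))"
    unfolding succeeds_def by blast
  from sim[OF P3 L1eq grid sinkimg T2, of T] obtain t1 where
    h1: "\<phi> (fst (packet_state L1 k p d t1)) = sink B0 k" and
    h3: "\<forall>s<t1. in_grid B1 (fst (packet_state L1 k p d s)) \<and> \<not> is_sink B1 (fst (packet_state L1 k p d s))"
    using T1 by auto
  define q1 where "q1 = fst (packet_state L1 k p d t1)"
  show ?thesis
  proof (cases "q1 = sink B1 k")
    case True
    then show ?thesis unfolding succeeds_def using h3 q1_def by (intro exI[of _ t1]) auto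
  next
    case False
    have "in_grid B1 q1 \<and> \<not> is_sink B1 q1"
      using ing uniq False h1 grid q1_def by metis
    then obtain dd where dd: "L1 q1 = Some (k, dd)" "mv q1 dd = sink B1 k"
      using spec h1 q1_def by blast
    have "fst (packet_state L1 k p d (Suc t1)) = sink B1 k"
      using dd unfolding ps_Suc q1_def[symmetric] by (simp add: eff_def)
    moreover have "\<forall>s<Suc t1. in_grid B1 (fst (packet_state L1 k p d s)) \<and> \<not> is_sink B1 (fst (packet_state L1 k p d s))"
      using h3 \<open>in_grid B1 q1 \<and> \<not> is_sink B1 q1\<close> q1_def by (auto simp: less_Suc_eq)
    ultimately show ?thesis unfolding succeeds_def by blast
  qed
qed


lemma generic:
  fixes \<phi> :: "int \<times> int \<Rightarrow> int \<times> int"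
  assumes P3: "\<And>q e. \<phi> (mv q e) = mv (\<phi> q) e \<or> (\<phi> (mv q e) = \<phi> q \<and> \<phi> (mv (mv q e) e) = mv (\<phi> q) e)"
    and grid: "\<And>q. in_grid B0 (\<phi> q) \<Longrightarrow> in_grid B1 q"
    and P4: "\<And>p q. \<phi> p = \<phi> q \<Longrightarrow> p \<noteq> q \<Longrightarrow> \<exists>dd. mv p dd = q"
    and sinkmap: "\<And>k. k < ncolors B1 \<Longrightarrow> \<phi> (sink B1 k) = sink B0 k"
    and nc: "ncolors B0 = ncolors B1"
    and bd: "is_board B0"
    and ent: "\<And>p d. (p, d) \<in> entries B1 \<Longrightarrow> (\<phi> p, d) \<in> entries B0"
    and hp: "has_perfect_layout B0"
  shows "has_perfect_layout B1"
proof -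
  from hp obtain L0 where L0: "perfect_layout B0 L0" unfolding has_perfect_layout_def by blast
  define col where "col q = (SOME k. k < ncolors B0 \<and> sink B0 k = \<phi> q)" for q
  define L1 :: layout where "L1 q = (if in_grid B1 q \<and> \<not> is_sink B1 q \<and> is_sink B0 (\<phi> q)
      then Some (col q, SOME dd. mv q dd = sink B1 (col q)) else L0 (\<phi> q))" for q
  have inj: "inj_on (sink B0) {..<ncolors B0}" using bd unfolding is_board_def by blast
  have sinkimg: "is_sink B0 (\<phi> q)" if "is_sink B1 q" for q
    using that sinkmap nc unfolding is_sink_def by metis
  have colk: "col q = k" if "k < ncolors B0" "\<phi> q = sink B0 k" for q k
  proof -
    have "col q < ncolors B0 \<and> sink B0 (col q) = \<phi> q"
      unfolding col_def by (rule someI[of _ k]) (use that in auto)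
    then show ?thesis using inj that unfolding inj_on_def by auto
  qed
  have col_ok: "col q < ncolors B0" if "is_sink B0 (\<phi> q)" for q
    using that colk unfolding is_sink_def by metis
  have L0lay: "is_layout B0 L0" using L0 unfolding perfect_layout_def by blast
  have L1eq: "L1 q = L0 (\<phi> q)" if "\<not> is_sink B0 (\<phi> q)" for q
    using that unfolding L1_def by auto
  have lay: "is_layout B1 L1"
    unfolding is_layout_def
  proof (intro allI impI)
    fix p k d assume h: "L1 p = Some (k, d)"
    show "in_grid B1 p \<and> \<not> is_sink B1 p \<and> k < ncolors B1"
    proof (cases "in_grid B1 p \<and> \<not> is_sink B1 p \<and> is_sink B0 (\<phi> p)")
      case True
      then show ?thesis using h col_ok[of p] nc unfolding L1_def by auto
    next
      case False
      then have "L0 (\<phi> p) = Some (k, d)" using h unfolding L1_def by auto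
      then have "in_grid B0 (\<phi> p) \<and> \<not> is_sink B0 (\<phi> p) \<and> k < ncolors B0"
        using L0lay unfolding is_layout_def by blast
      then show ?thesis using grid sinkimg nc by metis
    qed
  qed
  have "perfect_layout B1 L1"
    unfolding perfect_layout_def
  proof (intro conjI lay allI impI ballI)
    fix k x assume k: "k < ncolors B1" and x: "x \<in> entries B1"
    obtain p d where x': "x = (p, d)" by (cases x)
    have s0: "succeeds B0 L0 k (\<phi> p) d"
      using L0 ent[of p d] x x' k nc unfolding perfect_layout_def by auto
    have ing: "in_grid B0 (sink B0 k)" using bd k nc unfolding is_board_def by auto
    have uniq: "q = sink B1 k" if "is_sink B1 q" "\<phi> q = sink B0 k" for q
    proof -
      from that(1) obtain k' where k': "k' < ncolors B1" "sink B1 k' = q" unfolding is_sink_def by blast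
      then have "sink B0 k' = sink B0 k" using sinkmap that(2) by metis
      then have "k' = k" using inj k k' nc unfolding inj_on_def by auto
      then show ?thesis using k' by simp
    qed
    have spec: "\<exists>dd. L1 q = Some (k, dd) \<and> mv q dd = sink B1 k"
      if "in_grid B1 q" "\<not> is_sink B1 q" "\<phi> q = sink B0 k" for q
    proof -
      have sq: "is_sink B0 (\<phi> q)" using that(3) k nc unfolding is_sink_def by auto
      have ck: "col q = k" using colk that(3) k nc by auto
      have "\<phi> q = \<phi> (sink B1 k)" using that(3) sinkmap k by simp
      moreover have "q \<noteq> sink B1 k" using that(2) k unfolding is_sink_def by auto
      ultimately obtain dd where "mv q dd = sink B1 k" using P4 by blast
      then have "mv q (SOME dd. mv q dd = sink B1 k) = sink B1 k" by (rule someI)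
      then show ?thesis using that sq ck unfolding L1_def by auto
    qed
    show "case x of (p, d) \<Rightarrow> succeeds B1 L1 k p d"
      unfolding x' split
      by (rule succ_transfer[OF P3 L1eq grid sinkimg spec])
        (use s0 ing uniq sinkmap k in auto)
  qed
  then show ?thesis unfolding has_perfect_layout_def by blast
qed


definition phiR :: "int \<Rightarrow> int \<times> int \<Rightarrow> int \<times> int" where
  "phiR a q = (if fst q \<le> a then fst q else fst q - 1, snd q)"

definition phiC :: "int \<Rightarrow> int \<times> int \<Rightarrow> int \<times> int" where
  "phiC a q = (fst q, if snd q \<le> a then snd q else snd q - 1)"

lemma phiR_P3: "phiR a (mv q e) = mv (phiR a q) e \<or> (phiR a (mv q e) = phiR a q \<and> phiR a (mv (mv q e) e) = mv (phiR a q) e)"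
  by (cases e) (auto simp: phiR_def mv_def)

lemma phiC_P3: "phiC a (mv q e) = mv (phiC a q) e \<or> (phiC a (mv q e) = phiC a q \<and> phiC a (mv (mv q e) e) = mv (phiC a q) e)"
  by (cases e) (auto simp: phiC_def mv_def)

lemma phiR_P4: "phiR a p = phiR a q \<Longrightarrow> p \<noteq> q \<Longrightarrow> \<exists>dd. mv p dd = q"
proof -
  assume h: "phiR a p = phiR a q" "p \<noteq> q"
  then have "fst q = fst p + 1 \<and> snd q = snd p \<or> fst q = fst p - 1 \<and> snd q = snd p"
    unfolding phiR_def by (auto split: if_splits simp: prod_eq_iff)
  then show ?thesis
  proof
    assume "fst q = fst p + 1 \<and> snd q = snd p"
    then show ?thesis by (intro exI[of _ South]) (auto simp: mv_def prod_eq_iff)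
  next
    assume "fst q = fst p - 1 \<and> snd q = snd p"
    then show ?thesis by (intro exI[of _ North]) (auto simp: mv_def prod_eq_iff)
  qed
qed

lemma phiC_P4: "phiC a p = phiC a q \<Longrightarrow> p \<noteq> q \<Longrightarrow> \<exists>dd. mv p dd = q"
proof -
  assume h: "phiC a p = phiC a q" "p \<noteq> q"
  then have "snd q = snd p + 1 \<and> fst q = fst p \<or> snd q = snd p - 1 \<and> fst q = fst p"
    unfolding phiC_def by (auto split: if_splits simp: prod_eq_iff)
  then show ?thesis
  proof
    assume "snd q = snd p + 1 \<and> fst q = fst p"
    then show ?thesis by (intro exI[of _ East]) (auto simp: mv_def prod_eq_iff)
  next
    assume "snd q = snd p - 1 \<and> fst q = fst p"
    then show ?thesis by (intro exI[of _ West]) (auto simp: mv_def prod_eq_iff)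
  qed
qed

lemma rows_case:
  assumes "0 \<le> a" "a < int (rows B0)" "rows B1 = rows B0 + 1" "cols B0 = cols B1"
    "ncolors B0 = ncolors B1" "is_board B0"
    "\<And>k. k < ncolors B1 \<Longrightarrow> phiR a (sink B1 k) = sink B0 k"
    "has_perfect_layout B0"
  shows "has_perfect_layout B1"
proof (rule generic[of "phiR a"])
  show "\<And>q. in_grid B0 (phiR a q) \<Longrightarrow> in_grid B1 q"
    using assms(1-4) by (auto simp: in_grid_def phiR_def split: if_splits)
  show "\<And>p d. (p, d) \<in> entries B1 \<Longrightarrow> (phiR a p, d) \<in> entries B0"
    using assms(1-4) by (auto simp: entries_def phiR_def)
qed (use assms phiR_P3 phiR_P4 in auto)

lemma cols_case:
  assumes "0 \<le> a" "a < int (cols B0)" "cols B1 = cols B0 + 1" "rows B0 = rows B1"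
    "ncolors B0 = ncolors B1" "is_board B0"
    "\<And>k. k < ncolors B1 \<Longrightarrow> phiC a (sink B1 k) = sink B0 k"
    "has_perfect_layout B0"
  shows "has_perfect_layout B1"
proof (rule generic[of "phiC a"])
  show "\<And>q. in_grid B0 (phiC a q) \<Longrightarrow> in_grid B1 q"
    using assms(1-4) by (auto simp: in_grid_def phiC_def split: if_splits)
  show "\<And>p d. (p, d) \<in> entries B1 \<Longrightarrow> (phiC a p, d) \<in> entries B0"
    using assms(1-4) by (auto simp: entries_def phiC_def)
qed (use assms phiC_P3 phiC_P4 in auto)


theorem mainTheorem15:
  assumes "is_board B0" and "is_board B1" and "covered_by B0 B1"
    and "has_perfect_layout B0"
  shows "has_perfect_layout B1"
proof -
  have nc: "ncolors B0 = ncolors B1" using assms(3) unfolding covered_by_def by blast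
  have r0: "rows B0 \<ge> 1" "cols B0 \<ge> 1" using assms(1) unfolding is_board_def by auto
  from assms(3) consider
    (R) "cols B0 = cols B1" "rows B1 = rows B0 + 1" and
      "\<exists>r. 0 \<le> r \<and> r < int (rows B1) \<and>
        (\<forall>k<ncolors B1. fst (sink B1 k) \<noteq> r \<and>
           sink B0 k = (if fst (sink B1 k) < r then sink B1 k
                        else (fst (sink B1 k) - 1, snd (sink B1 k))))"
  | (C) "rows B0 = rows B1" "cols B1 = cols B0 + 1" and
      "\<exists>c. 0 \<le> c \<and> c < int (cols B1) \<and>
        (\<forall>k<ncolors B1. snd (sink B1 k) \<noteq> c \<and>
           sink B0 k = (if snd (sink B1 k) < c then sink B1 k
                        else (fst (sink B1 k), snd (sink B1 k) - 1)))"
    unfolding covered_by_def by blast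
  then show ?thesis
  proof cases
    case R
    then obtain r where r: "0 \<le> r" "r < int (rows B1)" and
      sk: "\<And>k. k < ncolors B1 \<Longrightarrow> fst (sink B1 k) \<noteq> r \<and>
           sink B0 k = (if fst (sink B1 k) < r then sink B1 k
                        else (fst (sink B1 k) - 1, snd (sink B1 k)))" by blast
    define a where "a = (if r < int (rows B0) then r else r - 1)"
    show ?thesis
    proof (rule rows_case[of a])
      show "0 \<le> a" "a < int (rows B0)" using r r0 R unfolding a_def by auto
      fix k assume k: "k < ncolors B1"
      show "phiR a (sink B1 k) = sink B0 k" using sk[OF k] r R
        unfolding a_def phiR_def by (auto simp: prod_eq_iff)
    qed (use R nc assms in auto)
  next
    case C
    then obtain r where r: "0 \<le> r" "r < int (cols B1)" and
      sk: "\<And>k. k < ncolors B1 \<Longrightarrow> snd (sink B1 k) \<noteq> r \<and>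
           sink B0 k = (if snd (sink B1 k) < r then sink B1 k
                        else (fst (sink B1 k), snd (sink B1 k) - 1))" by blast
    define a where "a = (if r < int (cols B0) then r else r - 1)"
    show ?thesis
    proof (rule cols_case[of a])
      show "0 \<le> a" "a < int (cols B0)" using r r0 C unfolding a_def by auto
      fix k assume k: "k < ncolors B1"
      show "phiC a (sink B1 k) = sink B0 k" using sk[OF k] r C
        unfolding a_def phiC_def by (auto simp: prod_eq_iff)
    qed (use C nc assms in auto)
  qed
qed

end
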